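(* Every C*-algebra that is countably degree-2 saturated is countably quantifier-free saturated.
   Context: For $F\subseteq\mathbb R$ and $\varepsilon>0$ let $F_\varepsilon=\{x\in\mathbb R:\operatorname{dist}(x,F)\le\varepsilon\}$. For a class $\Phi$ of *-polynomials (noncommutative polynomials in variables $x_j,x_j^*$, $j\in\mathbb N$, with coefficients in the algebra), a C*-algebra $M$ is countably $\Phi$-saturated if for every sequence $P_n(\bar x)$ ($n\in\mathbb N$) of *-polynomials in $\Phi$ with coefficients in $M$ in variables $x_k$ ($k\in\mathbb N$) and every sequence of compact sets $K_n\subseteq\mathbb R$, the following are equivalent: (i) there are $b_k$ ($k\in\mathbb N$) in the unit ball of $M$ with $\|P_n(\bar b)\|\in K_n$ for all $n$; (ii) for every $m$ there are $b_k$ in the unit ball of $M$ with $\|P_n(\bar b)\|\in (K_n)_{1/m}$ for all $n\le m$. Countably degree-2 saturated means countably $\Phi$-saturated for $\Phi$ the *-polynomials of degree at most 2; countably quantifier-free saturated means countably $\Phi$-saturated for $\Phi$ the class of all *-polynomials. *)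

theory Defs
  imports "HOL-Analysis.Analysis"
begin

text \<open>The real Banach algebra structure comes
from the library classes; complex scalar multiplication and the involution are
added as class parameters.\<close>

class cstar_algebra = real_normed_algebra + banach +
  fixes cscale :: "complex \<Rightarrow> 'a \<Rightarrow> 'a"
    and adj :: "'a \<Rightarrow> 'a"
  assumes cscale_add_right: "cscale c (x + y) = cscale c x + cscale c y"
    and cscale_add_left: "cscale (c + d) x = cscale c x + cscale d x"
    and cscale_cscale: "cscale c (cscale d x) = cscale (c * d) x"
    and cscale_one: "cscale 1 x = x"
    and scaleR_cscale: "scaleR r x = cscale (complex_of_real r) x"
    and norm_cscale: "norm (cscale c x) = cmod c * norm x"
    and mult_cscale_left: "cscale c x * y = cscale c (x * y)"
    and mult_cscale_right: "x * cscale c y = cscale c (x * y)"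
    and adj_adj: "adj (adj x) = x"
    and adj_add: "adj (x + y) = adj x + adj y"
    and adj_cscale: "adj (cscale c x) = cscale (cnj c) (adj x)"
    and adj_mult: "adj (x * y) = adj y * adj x"
    and cstar_identity: "norm (adj x * x) = (norm x)\<^sup>2"

datatype 'a letter = Coef 'a | Var nat | SVar nat

type_synonym 'a spoly = "(complex \<times> 'a letter list) list"

fun letter_eval :: "(nat \<Rightarrow> 'a::cstar_algebra) \<Rightarrow> 'a letter \<Rightarrow> 'a" where
  "letter_eval b (Coef a) = a"
| "letter_eval b (Var j) = b j"
| "letter_eval b (SVar j) = adj (b j)"

text \<open>Product of a word; the empty word evaluates to 0 (no unit is assumed).\<close>
fun word_eval :: "(nat \<Rightarrow> 'a::cstar_algebra) \<Rightarrow> 'a letter list \<Rightarrow> 'a" where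
  "word_eval b [] = 0"
| "word_eval b [l] = letter_eval b l"
| "word_eval b (l # ls) = letter_eval b l * word_eval b ls"

definition spoly_eval :: "(nat \<Rightarrow> 'a::cstar_algebra) \<Rightarrow> 'a spoly \<Rightarrow> 'a" where
  "spoly_eval b P = sum_list (map (\<lambda>(c, w). cscale c (word_eval b w)) P)"

fun is_var :: "'a letter \<Rightarrow> bool" where
  "is_var (Coef a) = False"
| "is_var (Var j) = True"
| "is_var (SVar j) = True"

definition word_degree :: "'a letter list \<Rightarrow> nat" where
  "word_degree w = length (filter is_var w)"

definition spoly_degree :: "'a spoly \<Rightarrow> nat" where
  "spoly_degree P = foldr max (map (\<lambda>(c, w). word_degree w) P) 0"

text \<open>F_eps = {x. dist(x,F) \<le> eps}, with dist(x, {}) = \<infinity> (so the thickening of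
the empty set is empty).\<close>
definition thicken :: "real set \<Rightarrow> real \<Rightarrow> real set" where
  "thicken F \<epsilon> = {x. F \<noteq> {} \<and> infdist x F \<le> \<epsilon>}"

definition countably_saturated :: "'a spoly set \<Rightarrow> 'a::cstar_algebra itself \<Rightarrow> bool" where
  "countably_saturated \<Phi> _ \<longleftrightarrow>
     (\<forall>(P :: nat \<Rightarrow> 'a spoly) (K :: nat \<Rightarrow> real set).
        (\<forall>n. P n \<in> \<Phi>) \<longrightarrow> (\<forall>n. compact (K n)) \<longrightarrow>
        ((\<exists>b :: nat \<Rightarrow> 'a. (\<forall>k. norm (b k) \<le> 1) \<and>
              (\<forall>n. norm (spoly_eval b (P n)) \<in> K n))
         \<longleftrightarrow>
         (\<forall>m::nat. m \<ge> 1 \<longrightarrow> (\<exists>b :: nat \<Rightarrow> 'a. (\<forall>k. norm (b k) \<le> 1) \<and>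
              (\<forall>n \<le> m. norm (spoly_eval b (P n)) \<in> thicken (K n) (1 / real m))))))"

definition countably_degree2_saturated :: "'a::cstar_algebra itself \<Rightarrow> bool" where
  "countably_degree2_saturated T \<longleftrightarrow> countably_saturated {P. spoly_degree P \<le> 2} T"

definition countably_qf_saturated :: "'a::cstar_algebra itself \<Rightarrow> bool" where
  "countably_qf_saturated T \<longleftrightarrow> countably_saturated UNIV T"

end

theory Submission
  imports Defs "HOL-Library.Nat_Bijection"
begin

lemma cscale_zero_right: "cscale c (0::'a::cstar_algebra) = 0"
proof -
  have "cscale c (0::'a) = cscale c 0 + cscale c 0"
    using cscale_add_right[of c "0::'a" 0] by simp
  thus ?thesis by simp
qed

lemma norm_adj_le: "norm (adj (x::'a::cstar_algebra)) \<le> norm x"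
proof -
  let ?y = "adj x"
  have "(norm ?y)^2 = norm (adj ?y * ?y)" by (simp add: cstar_identity)
  also have "\<dots> = norm (x * ?y)" by (simp add: adj_adj)
  also have "\<dots> \<le> norm x * norm ?y" by (rule norm_mult_ineq)
  finally have "norm ?y * norm ?y \<le> norm x * norm ?y" by (simp add: power2_eq_square)
  thus ?thesis
    by (cases "norm ?y = 0") (auto simp: mult_le_cancel_right)
qed

fun lw :: "'a::cstar_algebra letter \<Rightarrow> real" where
  "lw (Coef a) = 1 + norm a"
| "lw (Var j) = 1"
| "lw (SVar j) = 1"

fun wt :: "'a::cstar_algebra letter list \<Rightarrow> real" where
  "wt [] = 1"
| "wt (l # ls) = lw l * wt ls"

lemma lw_ge1: "lw l \<ge> 1"
  by (cases l) auto

lemma wt_ge1: "wt s \<ge> 1"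
proof (induction s)
  case Nil then show ?case by simp
next
  case (Cons l s)
  have "1 * 1 \<le> lw l * wt s" using lw_ge1[of l] Cons by (intro mult_mono) auto
  then show ?case by simp
qed

lemma wt_pos: "wt s > 0"
  using wt_ge1[of s] by linarith

lemma letter_eval_norm:
  assumes "\<forall>k. norm (b k) \<le> 1"
  shows "norm (letter_eval b l) \<le> lw l"
  using assms norm_adj_le[of "b _"]
  by (cases l) (auto intro: order_trans)

lemma word_eval_Cons:
  "s \<noteq> [] \<Longrightarrow> word_eval b (l # s) = letter_eval b l * word_eval b s"
  by (cases s) auto

lemma word_eval_norm:
  assumes "\<forall>k. norm (b k) \<le> 1"
  shows "norm (word_eval b s) \<le> wt s"
proof (induction s)
  case Nil then show ?case by simp
next
  case (Cons l s)
  show ?case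
  proof (cases "s = []")
    case True
    then show ?thesis using letter_eval_norm[OF assms, of l] by simp
  next
    case False
    have "norm (word_eval b (l # s)) \<le> norm (letter_eval b l) * norm (word_eval b s)"
      using False by (simp add: word_eval_Cons norm_mult_ineq)
    also have "\<dots> \<le> lw l * wt s"
      using letter_eval_norm[OF assms, of l] Cons lw_ge1[of l] by (intro mult_mono) auto
    finally show ?thesis by simp
  qed
qed

definition yv :: "(nat \<Rightarrow> 'a::cstar_algebra) \<Rightarrow> 'a letter list \<Rightarrow> 'a" where
  "yv b s = (1 / wt s) *\<^sub>R word_eval b s"

lemma yv_norm:
  assumes "\<forall>k. norm (b k) \<le> 1"
  shows "norm (yv b s) \<le> 1"
proof -
  have "norm (yv b s) = norm (word_eval b s) / wt s"
    using wt_pos[of s] by (simp add: yv_def)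
  also have "\<dots> \<le> 1" using word_eval_norm[OF assms, of s] wt_pos[of s] by simp
  finally show ?thesis .
qed

definition W :: "'a spoly \<Rightarrow> nat \<Rightarrow> 'a letter list" where
  "W p i = (if i < length p then snd (p ! i) else [])"

definition vnew :: "nat \<Rightarrow> nat \<Rightarrow> nat \<Rightarrow> nat" where
  "vnew n i j = Suc (2 * prod_encode (n, prod_encode (i, j)))"

fun lift :: "'a letter \<Rightarrow> 'a letter" where
  "lift (Coef a) = Coef a"
| "lift (Var k) = Var (2 * k)"
| "lift (SVar k) = SVar (2 * k)"

definition Dp :: "(nat \<Rightarrow> 'a::cstar_algebra spoly) \<Rightarrow> nat \<Rightarrow> nat \<Rightarrow> nat \<Rightarrow> 'a spoly" where
  "Dp P n i j = (case drop j (W (P n) i) of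
      [] \<Rightarrow> []
    | l # s' \<Rightarrow> (if s' = [] then
         [(1, [Var (vnew n i j)]), (of_real (- (1 / wt (l # s'))), [lift l])]
       else
         [(1, [Var (vnew n i j)]), (of_real (- (wt s' / wt (l # s'))), [lift l, Var (vnew n i (Suc j))])]))"

definition Tp :: "(nat \<Rightarrow> 'a::cstar_algebra spoly) \<Rightarrow> nat \<Rightarrow> 'a spoly" where
  "Tp P n = map (\<lambda>i. (fst (P n ! i) * of_real (wt (W (P n) i)),
       if W (P n) i = [] then [] else [Var (vnew n i 0)])) [0..<length (P n)]"

definition Qp :: "(nat \<Rightarrow> 'a::cstar_algebra spoly) \<Rightarrow> nat \<Rightarrow> 'a spoly" where
  "Qp P k = (if even k then Tp P (k div 2) else
     (case prod_decode (k div 2) of (n, ij) \<Rightarrow> case prod_decode ij of (i, j) \<Rightarrow> Dp P n i j))"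

definition ext :: "(nat \<Rightarrow> 'a::cstar_algebra) \<Rightarrow> (nat \<Rightarrow> 'a spoly) \<Rightarrow> nat \<Rightarrow> 'a" where
  "ext b P v = (if even v then b (v div 2) else
     (case prod_decode (v div 2) of (n, ij) \<Rightarrow> case prod_decode ij of (i, j) \<Rightarrow> yv b (drop j (W (P n) i))))"

lemma ext_vnew: "ext b P (vnew n i j) = yv b (drop j (W (P n) i))"
  by (simp add: ext_def vnew_def)

lemma ext_even: "ext b P (2 * k) = b k"
  by (simp add: ext_def)

lemma ext_norm:
  assumes "\<forall>k. norm (b k) \<le> 1"
  shows "norm (ext b P v) \<le> 1"
  using assms yv_norm[OF assms] by (auto simp: ext_def split: prod.splits)

lemma letter_eval_lift:
  assumes "\<forall>k. b' (2 * k) = b k"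
  shows "letter_eval b' (lift l) = letter_eval b l"
  using assms by (cases l) auto

lemma foldr_max_le: "foldr max xs (0::nat) \<le> k \<longleftrightarrow> (\<forall>x\<in>set xs. x \<le> k)"
  by (induction xs) auto

lemma Qp_deg: "spoly_degree (Qp P k) \<le> 2"
proof -
  have T: "spoly_degree (Tp P n) \<le> 2" for n
    by (auto simp: spoly_degree_def foldr_max_le Tp_def word_degree_def)
  have lv: "is_var (lift l) = is_var l" for l :: "'a letter" by (cases l) auto
  have wl: "word_degree w \<le> length w" for w :: "'a letter list"
    unfolding word_degree_def by (rule length_filter_le)
  have D: "spoly_degree (Dp P n i j) \<le> 2" for n i j
  proof -
    have "\<forall>x\<in>set (Dp P n i j). length (snd x) \<le> 2"
      by (auto simp: Dp_def split: list.splits)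
    then show ?thesis unfolding spoly_degree_def foldr_max_le
      using wl by (fastforce intro: order_trans)
  qed
  show ?thesis using T D by (auto simp: Qp_def split: prod.splits)
qed

lemma cscale_of_real: "cscale (complex_of_real r) (x::'a::cstar_algebra) = r *\<^sub>R x"
  by (simp add: scaleR_cscale)

lemma Dp_eval1:
  assumes "drop j (W (P n) i) = [l]"
  shows "spoly_eval b' (Dp P n i j) = b' (vnew n i j) + (- (1 / wt [l])) *\<^sub>R letter_eval b' (lift l)"
  using assms by (simp add: Dp_def spoly_eval_def cscale_one cscale_of_real del: of_real_minus of_real_divide wt.simps)

lemma Dp_eval2:
  assumes "drop j (W (P n) i) = l # s'" "s' \<noteq> []"
  shows "spoly_eval b' (Dp P n i j) = b' (vnew n i j) +
     (- (wt s' / wt (l # s'))) *\<^sub>R (letter_eval b' (lift l) * b' (vnew n i (Suc j)))"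
  using assms by (simp add: Dp_def spoly_eval_def cscale_one cscale_of_real del: of_real_minus of_real_divide wt.simps)

lemma Dp_eval0:
  assumes "drop j (W (P n) i) = []"
  shows "spoly_eval b' (Dp P n i j) = 0"
  using assms by (simp add: Dp_def spoly_eval_def)

lemma ext_even': "\<forall>k. ext b P (2 * k) = b k"
  by (simp add: ext_even)

lemma Dp_forward: "spoly_eval (ext b P) (Dp P n i j) = 0"
proof (cases "drop j (W (P n) i)")
  case Nil then show ?thesis by (rule Dp_eval0)
next
  case (Cons l s')
  note lift = letter_eval_lift[OF ext_even'[of b P]]
  show ?thesis
  proof (cases "s' = []")
    case True
    then show ?thesis using Cons
      by (simp add: Dp_eval1 ext_vnew lift yv_def del: wt.simps)
  next
    case False
    have "drop (Suc j) (W (P n) i) = tl (drop j (W (P n) i))"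
      by (simp add: drop_Suc tl_drop)
    then have ds: "drop (Suc j) (W (P n) i) = s'"
      using Cons by simp
    have "yv b (l # s') = (wt s' / wt (l # s')) *\<^sub>R (letter_eval b l * yv b s')"
      using False wt_pos[of s'] by (simp add: yv_def word_eval_Cons del: wt.simps)
    then show ?thesis using Cons False ds
      by (simp add: Dp_eval2 ext_vnew lift del: wt.simps)
  qed
qed

lemma Dp_backward:
  assumes ev: "\<forall>k. b' (2 * k) = b k"
    and D: "\<forall>j. spoly_eval b' (Dp P n i j) = 0"
  shows "drop j (W (P n) i) \<noteq> [] \<Longrightarrow> b' (vnew n i j) = yv b (drop j (W (P n) i))"
proof (induction "length (W (P n) i) - j" arbitrary: j rule: less_induct)
  case less
  note lift = letter_eval_lift[OF ev]
  obtain l s' where Cons: "drop j (W (P n) i) = l # s'"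
    using less.prems by (cases "drop j (W (P n) i)") auto
  show ?case
  proof (cases "s' = []")
    case True
    then show ?thesis using Cons D[rule_format, of j] Dp_eval1[of j P n i l b']
      by (simp add: lift yv_def algebra_simps del: wt.simps)
  next
    case False
    have "drop (Suc j) (W (P n) i) = tl (drop j (W (P n) i))"
      by (simp add: drop_Suc tl_drop)
    then have ds: "drop (Suc j) (W (P n) i) = s'"
      using Cons by simp
    have lt: "length (W (P n) i) - Suc j < length (W (P n) i) - j"
      using less.prems by simp
    have IH: "b' (vnew n i (Suc j)) = yv b s'"
      using less.hyps[OF lt] ds False by simp
    have yv: "yv b (l # s') = (wt s' / wt (l # s')) *\<^sub>R (letter_eval b l * yv b s')"
      using False wt_pos[of s'] by (simp add: yv_def word_eval_Cons del: wt.simps)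
    have "b' (vnew n i j) = (wt s' / wt (l # s')) *\<^sub>R (letter_eval b' (lift l) * b' (vnew n i (Suc j)))"
      using D[rule_format, of j] Dp_eval2[of j P n i l s' b', OF Cons False]
      by (simp add: algebra_simps del: wt.simps)
    then show ?thesis using Cons IH yv lift by (simp del: wt.simps)
  qed
qed

lemma Tp_eval:
  assumes H: "\<forall>i. W (P n) i \<noteq> [] \<longrightarrow> b' (vnew n i 0) = yv b (W (P n) i)"
  shows "spoly_eval b' (Tp P n) = spoly_eval b (P n)"
proof -
  let ?f = "\<lambda>(c, w). cscale c (word_eval b w)"
  have "spoly_eval b (P n) = sum_list (map ?f (map (\<lambda>i. P n ! i) [0..<length (P n)]))"
    unfolding spoly_eval_def by (simp add: map_nth)
  also have "map ?f (map (\<lambda>i. P n ! i) [0..<length (P n)]) =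
     map (\<lambda>(c, w). cscale c (word_eval b' w)) (Tp P n)"
    unfolding Tp_def map_map
  proof (rule map_cong[OF refl])
    fix i assume "i \<in> set [0..<length (P n)]"
    then have il: "i < length (P n)" by simp
    obtain c w where cw: "P n ! i = (c, w)" by fastforce
    have Wi: "W (P n) i = w" using il cw by (simp add: W_def)
    show "(?f \<circ> (!) (P n)) i = ((\<lambda>(c, w). cscale c (word_eval b' w)) \<circ>
      (\<lambda>i. (fst (P n ! i) * complex_of_real (wt (W (P n) i)),
              if W (P n) i = [] then [] else [Var (vnew n i 0)]))) i"
    proof (cases "w = []")
      case True then show ?thesis using cw Wi by (simp add: cscale_zero_right)
    next
      case False
      have e1: "b' (vnew n i 0) = (1 / wt w) *\<^sub>R word_eval b w"
        using H Wi False by (simp add: yv_def del: wt.simps)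
      have e2: "b' (vnew n i 0) = cscale (complex_of_real (1 / wt w)) (word_eval b w)"
        unfolding e1 by (rule scaleR_cscale)
      have e3: "complex_of_real (wt w) * complex_of_real (1 / wt w) = 1"
        using wt_pos[of w] by (simp del: wt.simps flip: of_real_mult)
      have "cscale (c * complex_of_real (wt w)) (b' (vnew n i 0)) = cscale c (word_eval b w)"
        unfolding e2 cscale_cscale mult.assoc e3 by simp
      then show ?thesis using cw Wi False by (simp del: wt.simps)
    qed
  qed
  finally show ?thesis by (simp add: spoly_eval_def)
qed

lemma thicken_self: "x \<in> F \<Longrightarrow> e \<ge> 0 \<Longrightarrow> x \<in> thicken F e"
  by (auto simp: thicken_def)

theorem mainTheorem2:
  assumes "countably_degree2_saturated TYPE('a::cstar_algebra)"
  shows "countably_qf_saturated TYPE('a)"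
  unfolding countably_qf_saturated_def countably_saturated_def
proof (intro allI impI)
  fix P :: "nat \<Rightarrow> 'a spoly" and K :: "nat \<Rightarrow> real set"
  assume cK: "\<forall>n. compact (K n)"
  define K' where "K' k = (if even k then K (k div 2) else {0})" for k
  have cK': "\<forall>k. compact (K' k)" using cK by (simp add: K'_def)
  have deg: "\<forall>k. Qp P k \<in> {P. spoly_degree P \<le> 2}" by (simp add: Qp_deg)
  have S: "(\<exists>b' :: nat \<Rightarrow> 'a. (\<forall>k. norm (b' k) \<le> 1) \<and> (\<forall>k. norm (spoly_eval b' (Qp P k)) \<in> K' k))
     \<longleftrightarrow> (\<forall>m::nat. m \<ge> 1 \<longrightarrow> (\<exists>b' :: nat \<Rightarrow> 'a. (\<forall>k. norm (b' k) \<le> 1) \<and>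
              (\<forall>k \<le> m. norm (spoly_eval b' (Qp P k)) \<in> thicken (K' k) (1 / real m))))"
    using assms deg cK' unfolding countably_degree2_saturated_def countably_saturated_def
    by blast
  have fwdT: "spoly_eval (ext b P) (Tp P n) = spoly_eval b (P n)" for b n
    by (rule Tp_eval) (simp add: ext_vnew)
  show "(\<exists>b. (\<forall>k. norm (b k) \<le> 1) \<and> (\<forall>n. norm (spoly_eval b (P n)) \<in> K n)) \<longleftrightarrow>
        (\<forall>m\<ge>1. \<exists>b. (\<forall>k. norm (b k) \<le> 1) \<and>
              (\<forall>n\<le>m. norm (spoly_eval b (P n)) \<in> thicken (K n) (1 / real m)))"
  proof
    assume "\<exists>b. (\<forall>k. norm (b k) \<le> 1) \<and> (\<forall>n. norm (spoly_eval b (P n)) \<in> K n)"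
    then show "\<forall>m\<ge>1. \<exists>b. (\<forall>k. norm (b k) \<le> 1) \<and>
              (\<forall>n\<le>m. norm (spoly_eval b (P n)) \<in> thicken (K n) (1 / real m))"
    proof (intro allI impI)
      fix m :: nat assume "m \<ge> 1"
      obtain b where "\<forall>k. norm (b k) \<le> 1" "\<forall>n. norm (spoly_eval b (P n)) \<in> K n"
        using \<open>\<exists>b. _\<close> by blast
      then show "\<exists>b. (\<forall>k. norm (b k) \<le> 1) \<and>
              (\<forall>n\<le>m. norm (spoly_eval b (P n)) \<in> thicken (K n) (1 / real m))"
        by (intro exI[of _ b]) (simp add: thicken_self)
    qed
  next
    assume H: "\<forall>m\<ge>1. \<exists>b. (\<forall>k. norm (b k) \<le> 1) \<and>
              (\<forall>n\<le>m. norm (spoly_eval b (P n)) \<in> thicken (K n) (1 / real m))"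
    have "\<forall>m::nat. m \<ge> 1 \<longrightarrow> (\<exists>b' :: nat \<Rightarrow> 'a. (\<forall>k. norm (b' k) \<le> 1) \<and>
              (\<forall>k \<le> m. norm (spoly_eval b' (Qp P k)) \<in> thicken (K' k) (1 / real m)))"
    proof (intro allI impI)
      fix m :: nat assume m: "m \<ge> 1"
      obtain b where b1: "\<forall>k. norm (b k) \<le> 1"
        and b2: "\<forall>n\<le>m. norm (spoly_eval b (P n)) \<in> thicken (K n) (1 / real m)"
        using H m by blast
      show "\<exists>b' :: nat \<Rightarrow> 'a. (\<forall>k. norm (b' k) \<le> 1) \<and>
              (\<forall>k \<le> m. norm (spoly_eval b' (Qp P k)) \<in> thicken (K' k) (1 / real m))"
      proof (intro exI conjI allI impI)
        show "norm (ext b P k) \<le> 1" for k by (rule ext_norm[OF b1])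
        fix k assume km: "k \<le> m"
        show "norm (spoly_eval (ext b P) (Qp P k)) \<in> thicken (K' k) (1 / real m)"
        proof (cases "even k")
          case True
          then show ?thesis using b2 km by (simp add: Qp_def K'_def fwdT)
        next
          case False
          then show ?thesis
            by (auto simp: Qp_def K'_def Dp_forward thicken_self split: prod.splits)
        qed
      qed
    qed
    then obtain b' :: "nat \<Rightarrow> 'a" where b1: "\<forall>k. norm (b' k) \<le> 1"
      and b2: "\<forall>k. norm (spoly_eval b' (Qp P k)) \<in> K' k"
      using S by blast
    define b where "b k = b' (2 * k)" for k
    have ev: "\<forall>k. b' (2 * k) = b k" by (simp add: b_def)
    have D: "\<forall>j. spoly_eval b' (Dp P n i j) = 0" for n i
    proof
      fix j
      let ?k = "Suc (2 * prod_encode (n, prod_encode (i, j)))"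
      have "norm (spoly_eval b' (Qp P ?k)) \<in> K' ?k" using b2 by blast
      then show "spoly_eval b' (Dp P n i j) = 0" by (simp add: Qp_def K'_def)
    qed
    have T: "spoly_eval b' (Tp P n) = spoly_eval b (P n)" for n
      by (rule Tp_eval) (use Dp_backward[OF ev D] in simp)
    show "\<exists>b. (\<forall>k. norm (b k) \<le> 1) \<and> (\<forall>n. norm (spoly_eval b (P n)) \<in> K n)"
    proof (intro exI conjI allI)
      show "norm (b k) \<le> 1" for k using b1 by (simp add: b_def)
      fix n
      have "norm (spoly_eval b' (Qp P (2 * n))) \<in> K' (2 * n)" using b2 by blast
      then show "norm (spoly_eval b (P n)) \<in> K n" by (simp add: Qp_def K'_def T)
    qed
  qed
qed

end
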